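(* Let $m,n\ge2$ be integers with $(m-1)(n-1)$ even. Then the rectangular grid graph $\mathcal R_{(m-1)\times(n-1)}$ (with either proper black/white coloring) satisfies \[|\mathcal{C}_B(\mathcal R_{(m-1)\times(n-1)})|=2^{(\gcd(m,n)-1)/2}.\]
   Context: $\mathcal R_{a\times b}$ is the graph with vertex set $\{1,\dots,b\}\times\{1,\dots,a\}\subset\mathbf{Z}^2$ and edges between vertices at Euclidean distance $1$. A channel of a graph is a vertex set $C$ such that every vertex is adjacent to an even number of vertices of $C$ (the empty set included). For a bipartite graph with black/white coloring, $\mathcal{C}_B$ denotes the set of channels consisting only of black vertices. *)

theory Defs
  imports Main
begin

definition grid_vertices :: "nat \<Rightarrow> nat \<Rightarrow> (int \<times> int) set" where
  "grid_vertices a b = {1..int b} \<times> {1..int a}"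

definition grid_adj :: "int \<times> int \<Rightarrow> int \<times> int \<Rightarrow> bool" where
  "grid_adj p q \<longleftrightarrow> (fst p - fst q)^2 + (snd p - snd q)^2 = 1"

definition is_channel :: "'v set \<Rightarrow> ('v \<Rightarrow> 'v \<Rightarrow> bool) \<Rightarrow> 'v set \<Rightarrow> bool" where
  "is_channel V adj C \<longleftrightarrow> C \<subseteq> V \<and> (\<forall>v\<in>V. even (card {u\<in>C. adj v u}))"

definition grid_color_class :: "nat \<Rightarrow> nat \<Rightarrow> int \<Rightarrow> (int \<times> int) set" where
  "grid_color_class a b c = {p \<in> grid_vertices a b. (fst p + snd p) mod 2 = c}"

definition black_channels :: "nat \<Rightarrow> nat \<Rightarrow> int \<Rightarrow> (int \<times> int) set set" where
  "black_channels a b c =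
     {C. is_channel (grid_vertices a b) grid_adj C \<and> C \<subseteq> grid_color_class a b c}"

end

theory Submission
  imports Defs
begin


lemma modI: "0 \<le> r \<Longrightarrow> r < b \<Longrightarrow> x = b*q + r \<Longrightarrow> x mod b = (r::int)"
  by simp

definition fold :: "int \<Rightarrow> int \<Rightarrow> int" where
  "fold N x = (let z = x mod (2*N) in if z \<le> N then z else 2*N - z)"

lemma mod2N: "N > 0 \<Longrightarrow> 0 \<le> x mod (2*N) \<and> x mod (2*N) < 2*(N::int)"
  by simp

lemma fold_range: "N > 0 \<Longrightarrow> 0 \<le> fold N x \<and> fold N x \<le> N"
proof -
  assume N: "N > 0"
  have "0 \<le> x mod (2*N)" "x mod (2*N) < 2*N" using mod2N[OF N] by auto
  then show ?thesis unfolding fold_def Let_def by auto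
qed

lemma fold_id: "0 \<le> x \<Longrightarrow> x \<le> N \<Longrightarrow> N > 0 \<Longrightarrow> fold N x = x"
  unfolding fold_def Let_def
  by (subst modI[of x _ _ 0]) auto

lemma fold_neg: "N > 0 \<Longrightarrow> fold N (-x) = fold N x"
proof -
  assume N: "N > 0"
  define z where "z = x mod (2*N)"
  have z: "0 \<le> z" "z < 2*N" using mod2N[OF N, of x] by (auto simp: z_def)
  have x: "x = 2*N*(x div (2*N)) + z" by (simp add: z_def)
  have "(-x) mod (2*N) = (if z = 0 then 0 else 2*N - z)"
  proof (cases "z = 0")
    case True
    have "-x = 2*N*(-(x div (2*N))) + 0" using x True by (simp add: algebra_simps)
    then show ?thesis using True N by (subst modI[of 0 _ _ "-(x div (2*N))"]) auto
  next
    case False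
    have "-x = 2*N*(-(x div (2*N)) - 1) + (2*N - z)" using x by (simp add: algebra_simps)
    then show ?thesis using False z by (subst modI[of "2*N - z" _ _ "-(x div (2*N)) - 1"]) auto
  qed
  then show ?thesis unfolding fold_def Let_def z_def[symmetric] using z by auto
qed

lemma fold_parity: "N > 0 \<Longrightarrow> fold N x mod 2 = x mod 2"
proof -
  assume N: "N > 0"
  define z where "z = x mod (2*N)"
  have x: "x = 2*N*(x div (2*N)) + z" by (simp add: z_def)
  define w where "w = N*(x div (2*N))"
  have "x = 2*w + z" using x by (simp add: w_def)
  then have a: "z mod 2 = x mod 2" by presburger
  have "(2*N - z) mod 2 = z mod 2" by presburger
  then show ?thesis unfolding fold_def Let_def z_def[symmetric] using a by auto
qed

lemma fold_nb: "N > 0 \<Longrightarrow>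
   ((fold N x = 0 \<or> fold N x = N) \<and> fold N (x-1) = fold N (x+1)) \<or>
   (0 < fold N x \<and> fold N x < N \<and>
     ((fold N (x-1) = fold N x - 1 \<and> fold N (x+1) = fold N x + 1) \<or>
      (fold N (x-1) = fold N x + 1 \<and> fold N (x+1) = fold N x - 1)))"
proof -
  assume N: "N > 0"
  define z where "z = x mod (2*N)"
  define q where "q = x div (2*N)"
  have z: "0 \<le> z" "z < 2*N" using mod2N[OF N, of x] by (auto simp: z_def)
  have x: "x = 2*N*q + z" by (simp add: z_def q_def)
  have p: "(x+1) mod (2*N) = (if z + 1 = 2*N then 0 else z+1)"
  proof (cases "z + 1 = 2*N")
    case True
    have "x + 1 = 2*N*(q+1) + 0" using x True by (simp add: algebra_simps)
    then show ?thesis using True N by (subst modI[of 0 _ _ "q+1"]) auto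
  next
    case False
    have "x + 1 = 2*N*q + (z+1)" using x by (simp add: algebra_simps)
    then show ?thesis using False z by (subst modI[of "z+1" _ _ q]) auto
  qed
  have m: "(x-1) mod (2*N) = (if z = 0 then 2*N - 1 else z - 1)"
  proof (cases "z = 0")
    case True
    have "x - 1 = 2*N*(q-1) + (2*N-1)" using x True by (simp add: algebra_simps)
    then show ?thesis using True N by (subst modI[of "2*N-1" _ _ "q-1"]) auto
  next
    case False
    have "x - 1 = 2*N*q + (z-1)" using x by (simp add: algebra_simps)
    then show ?thesis using False z by (subst modI[of "z-1" _ _ q]) auto
  qed
  have f0: "fold N x = (if z \<le> N then z else 2*N - z)" unfolding fold_def Let_def z_def ..
  have f1: "fold N (x+1) = (let w = (if z + 1 = 2*N then 0 else z+1) in if w \<le> N then w else 2*N - w)"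
    unfolding fold_def p ..
  have f2: "fold N (x-1) = (let w = (if z = 0 then 2*N - 1 else z - 1) in if w \<le> N then w else 2*N - w)"
    unfolding fold_def m ..
  show ?thesis unfolding f0 f1 f2 Let_def using z N by auto
qed

lemma sq_ge1: "(a::int) \<noteq> 0 \<Longrightarrow> 1 \<le> a^2"
  by (simp add: int_one_le_iff_zero_less)

lemma sq_sum1: "(a::int)^2 + b^2 = 1 \<longleftrightarrow> ((a = 1 \<or> a = -1) \<and> b = 0) \<or> (a = 0 \<and> (b = 1 \<or> b = -1))"
proof
  assume h: "a^2 + b^2 = 1"
  have "a = 0 \<or> b = 0"
  proof (rule ccontr)
    assume "\<not> (a = 0 \<or> b = 0)"
    then have "1 \<le> a^2" "1 \<le> b^2" using sq_ge1 by auto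
    then show False using h by linarith
  qed
  then show "((a = 1 \<or> a = -1) \<and> b = 0) \<or> (a = 0 \<and> (b = 1 \<or> b = -1))"
    using h by (auto simp: power2_eq_1_iff)
next
  assume "((a = 1 \<or> a = -1) \<and> b = 0) \<or> (a = 0 \<and> (b = 1 \<or> b = -1))"
  then show "a^2 + b^2 = 1" by auto
qed

lemma adj_iff: "grid_adj (X,Y) u \<longleftrightarrow> u = (X-1,Y) \<or> u = (X+1,Y) \<or> u = (X,Y-1) \<or> u = (X,Y+1)"
proof -
  obtain p q where u: "u = (p,q)" by (cases u)
  have "grid_adj (X,Y) u \<longleftrightarrow> (X-p)^2 + (Y-q)^2 = 1" by (simp add: grid_adj_def u)
  also have "\<dots> \<longleftrightarrow> ((X-p = 1 \<or> X-p = -1) \<and> Y-q = 0) \<or> (X-p = 0 \<and> (Y-q = 1 \<or> Y-q = -1))"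
    by (rule sq_sum1)
  also have "\<dots> \<longleftrightarrow> u = (X-1,Y) \<or> u = (X+1,Y) \<or> u = (X,Y-1) \<or> u = (X,Y+1)"
    by (auto simp: u)
  finally show ?thesis .
qed

lemma even4: 
  assumes "a \<noteq> b" "a \<noteq> c" "a \<noteq> d" "b \<noteq> c" "b \<noteq> d" "c \<noteq> d"
  shows "even (card {u \<in> {a,b,c,d}. P u}) \<longleftrightarrow> ((P a = P b) = (P c = P d))"
proof -
  have e: "{u \<in> {a,b,c,d}. P u} = {a,b,c,d} \<inter> Collect P" by auto
  have "card {u \<in> {a,b,c,d}. P u} = (\<Sum>u\<in>{a,b,c,d}. if P u then 1 else 0)"
    unfolding e by (simp add: sum.If_cases)
  also have "\<dots> = (if P a then 1 else 0) + (if P b then 1 else 0) + (if P c then 1 else 0) + (if P d then (1::nat) else 0)"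
    using assms by simp
  finally have eq: "card {u \<in> {a,b,c,d}. P u} = (if P a then 1 else 0) + (if P b then 1 else 0) + (if P c then 1 else 0) + (if P d then (1::nat) else 0)" .
  show ?thesis unfolding eq by (cases "P a"; cases "P b"; cases "P c"; cases "P d") auto
qed

lemma nbset: "{u \<in> C. grid_adj (X,Y) u} = {u \<in> {(X-1,Y),(X+1,Y),(X,Y-1),(X,Y+1)}. u \<in> C}"
  by (auto simp: adj_iff)

lemma even_nb: "even (card {u \<in> C. grid_adj (X,Y) u}) \<longleftrightarrow>
   ((((X-1,Y) \<in> C) = ((X+1,Y) \<in> C)) = (((X,Y-1) \<in> C) = ((X,Y+1) \<in> C)))"
  unfolding nbset by (rule even4) auto



lemma periodic:
  assumes "\<And>i::int. g (i + p) = g i" shows "g (i + t*p) = g i"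
proof (induction t rule: int_induct[where k=0])
  case base then show ?case by simp
next
  case (step1 t) then show ?case using assms[of "i + t*p"] by (simp add: algebra_simps)
next
  case (step2 t) then show ?case using assms[of "i + (t-1)*p"] by (simp add: algebra_simps)
qed

definition hS :: "int \<Rightarrow> int \<Rightarrow> int \<Rightarrow> int set \<Rightarrow> int \<Rightarrow> bool" where
  "hS D K c S i = (let r = (i - c*K) mod D in r \<in> S \<or> D - r \<in> S)"

locale dk =
  fixes D K c :: int
  assumes DK: "D = 2*K+1" and K0: "K \<ge> 0" and c01: "c \<in> {0,1}"
begin

lemma Dpos: "D > 0" using DK K0 by simp

lemma hS_per: "hS D K c S (i + D) = hS D K c S i"
proof -
  have "(i + D - c*K) mod D = (i - c*K) mod D"
  proof -
    have "i + D - c*K = (i - c*K) + 1*D" by simp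
    then show ?thesis by (metis mod_mult_self1)
  qed
  then show ?thesis unfolding hS_def by simp
qed

lemma hS_refl: "hS D K c S (-i-c) = hS D K c S i"
proof -
  define a where "a = i - c*K"
  have e: "-i-c-c*K = (-a) + (-c)*D" unfolding a_def DK by (simp add: algebra_simps)
  have "(-i-c-c*K) mod D = (-a) mod D" unfolding e by (metis mod_mult_self1)
  also have "\<dots> = (if a mod D = 0 then 0 else D - a mod D)"
    using Dpos by (simp add: zmod_zminus1_eq_if)
  finally have r: "(-i-c-c*K) mod D = (if a mod D = 0 then 0 else D - a mod D)" .
  show ?thesis unfolding hS_def Let_def r a_def[symmetric] by auto
qed

lemma gen:
  assumes gp: "\<And>i. g (i + D) = g i" and gr: "\<And>i. g i = g (-i-c)"
  shows "hS D K c {t\<in>{1..K}. g (c*K+t) \<noteq> g (c*K)} i = (g i \<noteq> g (c*K))"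
proof -
  define S where "S = {t\<in>{1..K}. g (c*K+t) \<noteq> g (c*K)}"
  define r where "r = (i - c*K) mod D"
  define q where "q = (i - c*K) div D"
  have r0: "0 \<le> r" "r < D" using Dpos unfolding r_def by auto
  have "i = (c*K + r) + q*D" unfolding r_def q_def by simp
  then have gi: "g i = g (c*K + r)" using periodic[of g D, OF gp] by metis
  have h: "hS D K c S i = (r \<in> S \<or> D - r \<in> S)" unfolding hS_def r_def Let_def ..
  consider "r = 0" | "1 \<le> r \<and> r \<le> K" | "K+1 \<le> r" using r0 by linarith
  then have "hS D K c S i = (g i \<noteq> g (c*K))"
  proof cases
    case 1
    have "\<not> (r \<in> S \<or> D - r \<in> S)" using 1 DK unfolding S_def by auto
    then show ?thesis using h gi 1 by simp
  next
    case 2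
    have "(r \<in> S \<or> D - r \<in> S) = (g (c*K + r) \<noteq> g (c*K))" using 2 DK unfolding S_def by auto
    then show ?thesis using h gi by simp
  next
    case 3
    define t where "t = D - r"
    have t: "1 \<le> t" "t \<le> K" using 3 r0 DK unfolding t_def by auto
    have "g (c*K + r) = g ((c*K - t) + 1*D)" unfolding t_def by simp
    also have "\<dots> = g (c*K - t)" by (rule periodic[of g D, OF gp])
    also have "\<dots> = g (t - c*K - c)" using gr[of "c*K - t"] by (simp add: algebra_simps)
    also have "\<dots> = g ((t - c*K - c) + c*D)" by (rule periodic[of g D, OF gp, symmetric])
    also have "(t - c*K - c) + c*D = c*K + t" unfolding DK by (simp add: algebra_simps)
    finally have "g (c*K + r) = g (c*K + t)" .
    moreover have "D - r = t" unfolding t_def ..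
    ultimately have "(r \<in> S \<or> D - r \<in> S) = (g (c*K + r) \<noteq> g (c*K))" using t 3 unfolding S_def by auto
    then show ?thesis using h gi by simp
  qed
  then show ?thesis unfolding S_def .
qed

end


definition CS :: "nat \<Rightarrow> nat \<Rightarrow> int \<Rightarrow> int set \<Rightarrow> (int \<times> int) set" where
  "CS m n c S = {p \<in> grid_vertices (m-1) (n-1). (fst p + snd p) mod 2 = c \<and>
     hS (int (gcd m n)) (int ((gcd m n - 1) div 2)) c S ((fst p + snd p - c) div 2) \<noteq>
     hS (int (gcd m n)) (int ((gcd m n - 1) div 2)) c S ((fst p - snd p - c) div 2)}"

lemma V_eq: "m \<ge> 2 \<Longrightarrow> n \<ge> 2 \<Longrightarrow> grid_vertices (m-1) (n-1) = {1..int n - 1} \<times> {1..int m - 1}"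
  unfolding grid_vertices_def by (simp add: of_nat_diff)

locale vk =
  fixes m n :: nat and c :: int
  assumes m2: "m \<ge> 2" and n2: "n \<ge> 2" and c01: "c \<in> {0,1}" and oddg: "odd (gcd m n)"
begin

definition D :: int where "D = int (gcd m n)"
definition K :: int where "K = int ((gcd m n - 1) div 2)"

lemma DK: "D = 2*K+1"
proof -
  have "gcd m n = 2*((gcd m n - 1) div 2) + 1" using oddg by presburger
  then show ?thesis unfolding D_def K_def by linarith
qed

lemma K0: "K \<ge> 0" unfolding K_def by simp

lemma c01': "c = 0 \<or> c = 1" using c01 by auto

sublocale dk D K c using DK K0 c01 by unfold_locales

lemma Dm: "D dvd int m" unfolding D_def by simp
lemma Dn: "D dvd int n" unfolding D_def by simp
lemma Dlem: "D \<le> int m" "D \<le> int n" unfolding D_def using m2 n2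
  by (simp_all add: gcd_le1_nat gcd_le2_nat)

lemma CS_alt: "CS m n c S = {p \<in> grid_vertices (m-1) (n-1). (fst p + snd p) mod 2 = c \<and>
     hS D K c S ((fst p + snd p - c) div 2) \<noteq> hS D K c S ((fst p - snd p - c) div 2)}"
  unfolding CS_def D_def K_def ..

lemma h_per: "hS D K c S (i + t*D) = hS D K c S i"
  by (rule periodic) (rule hS_per)

lemma h_m: "hS D K c S (i - int m) = hS D K c S i"
proof -
  obtain a where a: "int m = D * a" using Dm by (auto elim: dvdE)
  have e: "i - int m = i + (-a)*D" unfolding a by simp
  show ?thesis unfolding e by (rule h_per)
qed

lemma h_n: "hS D K c S (i - int n) = hS D K c S i"
proof -
  obtain a where a: "int n = D * a" using Dn by (auto elim: dvdE)
  have e: "i - int n = i + (-a)*D" unfolding a by simp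
  show ?thesis unfolding e by (rule h_per)
qed

lemma h_n2: "hS D K c S (int n - c - i) = hS D K c S i"
proof -
  have "hS D K c S (int n - c - i) = hS D K c S (-(i - int n) - c)" by (simp add: algebra_simps)
  also have "\<dots> = hS D K c S (i - int n)" by (rule hS_refl)
  finally show ?thesis using h_n by simp
qed

definition Phi :: "int set \<Rightarrow> int \<Rightarrow> int \<Rightarrow> bool" where
  "Phi S x y = ((x + y) mod 2 = c \<and> hS D K c S ((x + y - c) div 2) \<noteq> hS D K c S ((x - y - c) div 2))"

lemma Phi_frame:
  assumes "x = 0 \<or> x = int n \<or> y = 0 \<or> y = int m"
  shows "\<not> Phi S x y"
proof
  assume P: "Phi S x y"
  define i where "i = (x + y - c) div 2"
  define j where "j = (x - y - c) div 2"
  have pm: "(x + y) mod 2 = c" using P unfolding Phi_def by simp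
  have ei: "x + y - c = 2*i" unfolding i_def using pm c01' by presburger
  have ej: "x - y - c = 2*j" unfolding j_def using pm c01' by presburger
  have ne: "hS D K c S i \<noteq> hS D K c S j" using P unfolding Phi_def i_def j_def by simp
  consider "x = 0" | "x = int n" | "y = 0" | "y = int m" using assms by auto
  then show False
  proof cases
    case 1
    then have "j = -i-c" using ei ej by linarith
    then show False using ne hS_refl[where S=S and i=i] by simp
  next
    case 2
    then have "j = int n - c - i" using ei ej by linarith
    then show False using ne h_n2[where i=i and S=S] by simp
  next
    case 3
    then have "j = i" using ei ej by linarith
    then show False using ne by simp
  next
    case 4
    then have "j = i - int m" using ei ej by linarith
    then show False using ne h_m[where i=i and S=S] by simp
  qed
qed

lemma CS_rect:
  assumes "0 \<le> x" "x \<le> int n" "0 \<le> y" "y \<le> int m"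
  shows "((x,y) \<in> CS m n c S) = Phi S x y"
proof (cases "x = 0 \<or> x = int n \<or> y = 0 \<or> y = int m")
  case True
  then have "(x,y) \<notin> grid_vertices (m-1) (n-1)" unfolding V_eq[OF m2 n2] by auto
  then show ?thesis using Phi_frame[OF True] unfolding CS_alt by auto
next
  case False
  then have "(x,y) \<in> grid_vertices (m-1) (n-1)" unfolding V_eq[OF m2 n2] using assms by auto
  then show ?thesis unfolding CS_alt Phi_def by auto
qed

lemma CS_chan: "CS m n c S \<in> black_channels (m-1) (n-1) c"
proof -
  have "even (card {u \<in> CS m n c S. grid_adj v u})" if v: "v \<in> grid_vertices (m-1) (n-1)" for v
  proof -
    obtain X Y where vXY: "v = (X,Y)" by (cases v)
    have r: "1 \<le> X" "X \<le> int n - 1" "1 \<le> Y" "Y \<le> int m - 1" using v unfolding vXY V_eq[OF m2 n2] by auto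
    have m1: "((X-1,Y) \<in> CS m n c S) = Phi S (X-1) Y" by (rule CS_rect) (use r in auto)
    have m2': "((X+1,Y) \<in> CS m n c S) = Phi S (X+1) Y" by (rule CS_rect) (use r in auto)
    have m3: "((X,Y-1) \<in> CS m n c S) = Phi S X (Y-1)" by (rule CS_rect) (use r in auto)
    have m4: "((X,Y+1) \<in> CS m n c S) = Phi S X (Y+1)" by (rule CS_rect) (use r in auto)
    have key: "(Phi S (X-1) Y = Phi S (X+1) Y) = (Phi S X (Y-1) = Phi S X (Y+1))"
    proof (cases "(X + Y) mod 2 = c")
      case True
      then have "(X - 1 + Y) mod 2 \<noteq> c" "(X + 1 + Y) mod 2 \<noteq> c" "(X + (Y - 1)) mod 2 \<noteq> c" "(X + (Y + 1)) mod 2 \<noteq> c"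
        using c01' by presburger+
      then show ?thesis unfolding Phi_def by simp
    next
      case False
      define i where "i = (X - 1 + Y - c) div 2"
      define j where "j = (X - 1 - Y - c) div 2"
      have p: "(X - 1 + Y) mod 2 = c" "(X + 1 + Y) mod 2 = c" "(X + (Y - 1)) mod 2 = c" "(X + (Y + 1)) mod 2 = c"
        using False c01' by presburger+
      have d1: "(X + 1 + Y - c) div 2 = i + 1" unfolding i_def by presburger
      have d2: "(X + 1 - Y - c) div 2 = j + 1" unfolding j_def by presburger
      have d3: "(X + (Y - 1) - c) div 2 = i" unfolding i_def by presburger
      have d4: "(X - (Y - 1) - c) div 2 = j + 1" unfolding j_def by presburger
      have d5: "(X + (Y + 1) - c) div 2 = i + 1" unfolding i_def by presburger
      have d6: "(X - (Y + 1) - c) div 2 = j" unfolding j_def by presburger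
      have q1: "Phi S (X-1) Y = (hS D K c S i \<noteq> hS D K c S j)"
        unfolding Phi_def i_def j_def using p(1) by (simp add: algebra_simps)
      have q2: "Phi S (X+1) Y = (hS D K c S (i+1) \<noteq> hS D K c S (j+1))"
        unfolding Phi_def using p(2) d1 d2 by simp
      have q3: "Phi S X (Y-1) = (hS D K c S i \<noteq> hS D K c S (j+1))"
        unfolding Phi_def using p(3) d3 d4 by simp
      have q4: "Phi S X (Y+1) = (hS D K c S (i+1) \<noteq> hS D K c S j)"
        unfolding Phi_def using p(4) d5 d6 by simp
      show ?thesis unfolding q1 q2 q3 q4 by blast
    qed
    show ?thesis unfolding vXY even_nb m1 m2' m3 m4 by (rule key)
  qed
  moreover have "CS m n c S \<subseteq> grid_vertices (m-1) (n-1)" unfolding CS_alt by auto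
  moreover have "CS m n c S \<subseteq> grid_color_class (m-1) (n-1) c" unfolding CS_alt grid_color_class_def by auto
  ultimately show ?thesis unfolding black_channels_def is_channel_def by auto
qed

end


lemma shift_inv:
  assumes "\<And>i::int. f (i + 1) = f i" shows "f i = f 0"
proof (induction i rule: int_induct[where k=0])
  case base then show ?case ..
next
  case (step1 i) then show ?case using assms by simp
next
  case (step2 i) then show ?case using assms[of "i-1"] by simp
qed



locale chan =
  fixes m n :: nat and c :: int and C :: "(int \<times> int) set"
  assumes m2: "m \<ge> 2" and n2: "n \<ge> 2" and c01: "c \<in> {0,1}"
    and Cb: "C \<in> black_channels (m-1) (n-1) c"
begin

lemma CV: "p \<in> C \<Longrightarrow> 1 \<le> fst p \<and> fst p \<le> int n - 1 \<and> 1 \<le> snd p \<and> snd p \<le> int m - 1"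
  using Cb m2 n2 unfolding black_channels_def is_channel_def V_eq[OF m2 n2] by auto

lemma Cblack: "p \<in> C \<Longrightarrow> (fst p + snd p) mod 2 = c"
  using Cb unfolding black_channels_def grid_color_class_def by auto

lemma Cchan: "1 \<le> X \<Longrightarrow> X \<le> int n - 1 \<Longrightarrow> 1 \<le> Y \<Longrightarrow> Y \<le> int m - 1 \<Longrightarrow>
   even (card {u \<in> C. grid_adj (X,Y) u})"
  using Cb m2 n2 unfolding black_channels_def is_channel_def V_eq[OF m2 n2] by auto

definition E :: "int \<Rightarrow> int \<Rightarrow> bool" where
  "E x y = ((fold (int n) x, fold (int m) y) \<in> C)"

lemma npos: "int n > 0" and mpos: "int m > 0" using m2 n2 by auto

lemma E_rect: "0 \<le> x \<Longrightarrow> x \<le> int n \<Longrightarrow> 0 \<le> y \<Longrightarrow> y \<le> int m \<Longrightarrow> E x y = ((x,y) \<in> C)"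
  unfolding E_def using fold_id npos mpos by simp

lemma LR:
  shows "(E (x-1) y = E (x+1) y) = (E x (y-1) = E x (y+1))"
proof -
  define X where "X = fold (int n) x"
  define Y where "Y = fold (int m) y"
  note nx = fold_nb[OF npos, of x, folded X_def]
  note ny = fold_nb[OF mpos, of y, folded Y_def]
  have Xr: "0 \<le> X \<and> X \<le> int n" using fold_range[OF npos] X_def by simp
  have Yr: "0 \<le> Y \<and> Y \<le> int m" using fold_range[OF mpos] Y_def by simp
  have notC1: "(X, t) \<notin> C" if "X = 0 \<or> X = int n" for t using CV[of "(X,t)"] that by auto
  have notC2: "(t, Y) \<notin> C" if "Y = 0 \<or> Y = int m" for t using CV[of "(t,Y)"] that by auto
  show ?thesis
  proof (cases "(X = 0 \<or> X = int n) \<and> fold (int n) (x-1) = fold (int n) (x+1)")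
    case True
    then show ?thesis unfolding E_def X_def[symmetric] using notC1 by simp
  next
    case Fx: False
    then have X: "0 < X" "X < int n" and
      xs: "(fold (int n) (x-1) = X - 1 \<and> fold (int n) (x+1) = X + 1) \<or>
      (fold (int n) (x-1) = X + 1 \<and> fold (int n) (x+1) = X - 1)" using nx by auto
    show ?thesis
    proof (cases "(Y = 0 \<or> Y = int m) \<and> fold (int m) (y-1) = fold (int m) (y+1)")
      case True
      then show ?thesis unfolding E_def Y_def[symmetric] using notC2 by simp
    next
      case Fy: False
      then have Y: "0 < Y" "Y < int m" and
        ys: "(fold (int m) (y-1) = Y - 1 \<and> fold (int m) (y+1) = Y + 1) \<or>
        (fold (int m) (y-1) = Y + 1 \<and> fold (int m) (y+1) = Y - 1)" using ny by auto
      have "(X + Y) mod 2 = (x + y) mod 2"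
        using fold_parity[OF npos, of x] fold_parity[OF mpos, of y] unfolding X_def Y_def
        by (metis mod_add_eq)
      have ev: "((((X-1,Y) \<in> C) = ((X+1,Y) \<in> C)) = (((X,Y-1) \<in> C) = ((X,Y+1) \<in> C)))"
        using Cchan[of X Y] X Y even_nb[of C X Y] by simp
      show ?thesis unfolding E_def X_def[symmetric] Y_def[symmetric]
        using xs ys ev by auto
    qed
  qed
qed


definition F :: "int \<Rightarrow> int \<Rightarrow> bool" where
  "F i j = E (i+j+c) (i-j)"

lemma Frel: "(F i j = F (i+1) (j+1)) = (F i (j+1) = F (i+1) j)"
proof -
  have "(E (i+j+c+1-1) (i-j) = E (i+j+c+1+1) (i-j)) = (E (i+j+c+1) (i-j-1) = E (i+j+c+1) (i-j+1))"
    by (rule LR)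
  moreover have "E (i+j+c+1-1) (i-j) = F i j" by (simp add: F_def)
  moreover have "E (i+j+c+1+1) (i-j) = F (i+1) (j+1)" unfolding F_def by (rule arg_cong2[where f=E]) auto
  moreover have "E (i+j+c+1) (i-j-1) = F i (j+1)" unfolding F_def by (rule arg_cong2[where f=E]) auto
  moreover have "E (i+j+c+1) (i-j+1) = F (i+1) j" unfolding F_def by (rule arg_cong2[where f=E]) auto
  ultimately show ?thesis by simp
qed

lemma Rinv: "(F i j \<noteq> F i (j+1)) = (F 0 j \<noteq> F 0 (j+1))"
proof -
  have "(\<lambda>i. F i j \<noteq> F i (j+1)) i = (\<lambda>i. F i j \<noteq> F i (j+1)) 0"
  proof (rule shift_inv)
    fix i show "(F (i+1) j \<noteq> F (i+1) (j+1)) = (F i j \<noteq> F i (j+1))"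
      using Frel[of i j] by blast
  qed
  then show ?thesis by simp
qed

lemma Fsol: "F i j = (F i 0 \<noteq> (F 0 j \<noteq> F 0 0))"
proof (induction j rule: int_induct[where k=0])
  case base then show ?case by blast
next
  case (step1 j) then show ?case using Rinv[of i j] by blast
next
  case (step2 j) then show ?case using Rinv[of i "j-1"] by auto
qed

lemma E0: "E 0 y = False" unfolding E_def using fold_id[of 0 "int n"] npos CV[of "(0, fold (int m) y)"] by auto
lemma En: "E (int n) y = False" unfolding E_def using fold_id[of "int n" "int n"] npos CV[of "(int n, fold (int m) y)"] by auto
lemma Em: "E x (int m) = False" unfolding E_def using fold_id[of "int m" "int m"] mpos CV[of "(fold (int n) x, int m)"] by auto
lemma Eneg: "E x (-y) = E x y" unfolding E_def using fold_neg mpos by simp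

lemma F00: "F 0 0 = False"
  unfolding F_def using E_rect[of c 0] c01 npos mpos CV[of "(c,0)"] by auto

definition g :: "int \<Rightarrow> bool" where "g i = F i 0"

lemma Fg: "F i j = (g i \<noteq> g j)"
proof -
  have "F 0 j = F j 0" unfolding F_def using Eneg[of "j+c" j] by simp
  then show ?thesis using Fsol[of i j] F00 unfolding g_def by simp
qed

lemma g1: "g i = g (-i-c)"
proof -
  have "F i (-i-c) = E 0 (2*i+c)" unfolding F_def by (rule arg_cong2[where f=E]) auto
  then show ?thesis using Fg[of i "-i-c"] E0 by simp
qed

lemma g2: "g i = g (int n - c - i)"
proof -
  have "F i (int n - c - i) = E (int n) (2*i+c - int n)" unfolding F_def by (rule arg_cong2[where f=E]) auto
  then show ?thesis using Fg[of i "int n - c - i"] En by simp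
qed

lemma g3: "g i = g (i - int m)"
proof -
  have "F i (i - int m) = E (2*i - int m + c) (int m)" unfolding F_def by (rule arg_cong2[where f=E]) auto
  then show ?thesis using Fg[of i "i - int m"] Em by simp
qed

lemma gm: "g (i + int m) = g i" using g3[of "i + int m"] by simp
lemma gn: "g (i + int n) = g i"
proof -
  have "g (i + int n) = g (int n - c - (i + int n))" by (rule g2)
  also have "int n - c - (i + int n) = -i-c" by simp
  finally show ?thesis using g1[of i] by simp
qed

lemma gD: "g (i + t * int (gcd m n)) = g i"
proof -
  obtain u v where uv: "u * int m + v * int n = int (gcd m n)"
    using bezout_int[of "int m" "int n"] by auto
  have "g (i + t * int (gcd m n)) = g ((i + (t*v) * int n) + (t*u) * int m)"
    unfolding uv[symmetric] by (simp add: algebra_simps)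
  also have "\<dots> = g (i + (t*v) * int n)" by (rule periodic[of g "int m"]) (rule gm)
  also have "\<dots> = g i" by (rule periodic[of g "int n"]) (rule gn)
  finally show ?thesis .
qed

lemma C_char: "p \<in> C \<longleftrightarrow> p \<in> grid_vertices (m-1) (n-1) \<and> (fst p + snd p) mod 2 = c \<and>
   g ((fst p + snd p - c) div 2) \<noteq> g ((fst p - snd p - c) div 2)"
proof -
  obtain x y where p: "p = (x,y)" by (cases p)
  show ?thesis
  proof (cases "p \<in> grid_vertices (m-1) (n-1) \<and> (x + y) mod 2 = c")
    case True
    define i where "i = (x + y - c) div 2"
    define j where "j = (x - y - c) div 2"
    have c01': "c = 0 \<or> c = 1" using c01 by auto
    have pm: "(x + y) mod 2 = c" using True by simp
    have ev: "x + y - c = 2*i" unfolding i_def using pm c01' by presburger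
    have j: "j = i - y" unfolding j_def i_def using ev by presburger
    have xy: "x = i+j+c" "y = i - j" using ev j by auto
    have r: "0 \<le> x" "x \<le> int n" "0 \<le> y" "y \<le> int m" using True p unfolding V_eq[OF m2 n2] by auto
    have "p \<in> C \<longleftrightarrow> E x y" using E_rect[OF r] p by simp
    also have "\<dots> \<longleftrightarrow> F i j" unfolding F_def xy ..
    finally show ?thesis using True Fg p i_def j_def by simp
  next
    case False
    then show ?thesis using Cb Cblack p unfolding black_channels_def is_channel_def by auto
  qed
qed

end


context vk
begin

lemma witness:
  assumes t: "t \<in> {1..K}"
  shows "\<exists>p. \<forall>S \<subseteq> {1..K}. (p \<in> CS m n c S \<longleftrightarrow> t \<in> S)"
proof -
  have t1: "1 \<le> t" "t \<le> K" using t by auto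
  have h0: "\<not> hS D K c S (c*K)" if "S \<subseteq> {1..K}" for S
  proof -
    have "D \<notin> S"
    proof
      assume "D \<in> S"
      then have "D \<in> {1..K}" using that by blast
      then show False using DK K0 by simp
    qed
    moreover have "0 \<notin> S" using that by auto
    ultimately show ?thesis unfolding hS_def by simp
  qed
  show ?thesis
  proof (cases "c = 0")
    case True
    have "((t,t) \<in> CS m n c S) = (t \<in> S)" if S: "S \<subseteq> {1..K}" for S
    proof -
      have "((t,t) \<in> CS m n c S) = Phi S t t" by (rule CS_rect) (use t1 DK Dlem in auto)
      also have "\<dots> = (hS D K c S t \<noteq> hS D K c S 0)" unfolding Phi_def using True by simp
      also have "hS D K c S 0 = False" using h0[OF S] True by simp
      also have "hS D K c S t = (t \<in> S \<or> D - t \<in> S)" unfolding hS_def True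
        using t1 DK by simp
      also have "(D - t \<in> S) = False" using S t1 DK by auto
      finally show ?thesis by simp
    qed
    then show ?thesis by blast
  next
    case False
    then have c1: "c = 1" using c01' by simp
    have "((D-t,t) \<in> CS m n c S) = (t \<in> S)" if S: "S \<subseteq> {1..K}" for S
    proof -
      have "((D-t,t) \<in> CS m n c S) = Phi S (D-t) t" by (rule CS_rect) (use t1 DK Dlem in auto)
      also have "\<dots> = (hS D K c S K \<noteq> hS D K c S (K - t))"
      proof -
        have "(D - t + t) mod 2 = c" unfolding DK c1 by presburger
        moreover have "(D - t + t - c) div 2 = K" unfolding DK c1 by simp
        moreover have "(D - t - t - c) div 2 = K - t" unfolding DK c1 by presburger
        ultimately show ?thesis unfolding Phi_def by simp
      qed
      also have "hS D K c S K = False" using h0[OF S] c1 by simp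
      also have "hS D K c S (K - t) = (D - t \<in> S \<or> t \<in> S)"
      proof -
        have "(K - t - c*K) mod D = D - t"
        proof -
          have "K - t - c*K = (D - t) + (-1)*D" unfolding c1 DK by simp
          then have "(K - t - c*K) mod D = (D - t) mod D" by (metis mod_mult_self1)
          also have "\<dots> = D - t" by (rule modI[of _ _ _ 0]) (use t1 DK in auto)
          finally show ?thesis .
        qed
        then show ?thesis unfolding hS_def Let_def by simp
      qed
      also have "(D - t \<in> S) = False" using S t1 DK by auto
      finally show ?thesis by simp
    qed
    then show ?thesis by blast
  qed
qed

lemma CS_inj: "inj_on (CS m n c) (Pow {1..K})"
proof (rule inj_onI)
  fix S T assume S: "S \<in> Pow {1..K}" and T: "T \<in> Pow {1..K}" and e: "CS m n c S = CS m n c T"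
  show "S = T"
  proof (rule set_eqI)
    fix t
    show "t \<in> S \<longleftrightarrow> t \<in> T"
    proof (cases "t \<in> {1..K}")
      case True
      obtain p where p: "\<forall>S \<subseteq> {1..K}. (p \<in> CS m n c S \<longleftrightarrow> t \<in> S)" using witness[OF True] by blast
      have S': "S \<subseteq> {1..K}" and T': "T \<subseteq> {1..K}" using S T by auto
      have "t \<in> S \<longleftrightarrow> p \<in> CS m n c S" using p S' by blast
      also have "\<dots> \<longleftrightarrow> p \<in> CS m n c T" unfolding e ..
      also have "\<dots> \<longleftrightarrow> t \<in> T" using p T' by blast
      finally show ?thesis .
    next
      case False then show ?thesis using S T by auto
    qed
  qed
qed

lemma CS_surj:
  assumes C: "C \<in> black_channels (m-1) (n-1) c"
  shows "\<exists>S \<in> Pow {1..K}. C = CS m n c S"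
proof -
  interpret ch: chan m n c C using m2 n2 c01 C by unfold_locales
  define S where "S = {t\<in>{1..K}. ch.g (c*K+t) \<noteq> ch.g (c*K)}"
  have gp: "ch.g (i + D) = ch.g i" for i using ch.gD[of i 1] unfolding D_def by simp
  have hg: "hS D K c S i = (ch.g i \<noteq> ch.g (c*K))" for i
    unfolding S_def by (rule gen) (use gp ch.g1 in auto)
  have "C = CS m n c S"
  proof (rule set_eqI)
    fix p
    show "p \<in> C \<longleftrightarrow> p \<in> CS m n c S"
      unfolding ch.C_char CS_alt mem_Collect_eq hg by blast
  qed
  moreover have "S \<in> Pow {1..K}" unfolding S_def by auto
  ultimately show ?thesis by blast
qed

lemma card_bc: "card (black_channels (m-1) (n-1) c) = 2 ^ ((gcd m n - 1) div 2)"
proof -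
  have "bij_betw (CS m n c) (Pow {1..K}) (black_channels (m-1) (n-1) c)"
    unfolding bij_betw_def
  proof
    show "inj_on (CS m n c) (Pow {1..K})" by (rule CS_inj)
    show "CS m n c ` Pow {1..K} = black_channels (m-1) (n-1) c"
      using CS_chan CS_surj by blast
  qed
  then have "card (black_channels (m-1) (n-1) c) = card (Pow {1..K})"
    by (simp add: bij_betw_same_card)
  also have "\<dots> = 2 ^ card {1..K}" by (simp add: card_Pow)
  also have "card {1..K} = (gcd m n - 1) div 2" unfolding K_def by simp
  finally show ?thesis .
qed

end

theorem corollary4p8:
  fixes m n :: nat and c :: int
  assumes "m \<ge> 2" and "n \<ge> 2" and "even ((m - 1) * (n - 1))"
    and "c \<in> {0, 1}"
  shows "card (black_channels (m - 1) (n - 1) c) = 2 ^ ((gcd m n - 1) div 2)"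
proof -
  have "odd (gcd m n)"
  proof
    assume "even (gcd m n)"
    then have "even m" "even n" by (meson dvd_trans gcd_dvd1 gcd_dvd2)+
    then have "odd (m - 1)" "odd (n - 1)" using assms(1,2) by presburger+
    then show False using assms(3) by simp
  qed
  then interpret vk m n c using assms by unfold_locales
  show ?thesis by (rule card_bc)
qed

end
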